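(* (Truth lemma) Let $\Phi$ be the closure $cl(\varphi_0)$ of a formula and $M^*$ the canonical model for $\Phi$. For every $w\in W^*$ and every $\varphi\in\Phi$, $M^*,w\vDash\varphi$ iff $\varphi\in w$.
   Context: $\mathcal{L}_{AIL}$: $\varphi::=p\mid\neg\varphi\mid\varphi\wedge\varphi\mid A_i\varphi\mid I_i\varphi\mid E_i\varphi\mid[\approx]_i\varphi\mid[\circ^+]_i\varphi$ (countable atoms $\mathcal{P}$, finite agents $\mathcal{G}$). Hilbert system $\mathbf{AIL}$: axioms — propositional tautologies; $A_i\varphi\leftrightarrow A_i\neg\varphi$; $A_i(\varphi\wedge\psi)\leftrightarrow A_i\varphi\wedge A_i\psi$; $A_i\varphi\leftrightarrow A_iO_j\varphi$ for $O_j\in\{A_j,I_j,[\approx]_j,[\circ^+]_j,E_j\}$; $A_i\varphi\to I_iA_i\varphi$; $\neg A_i\varphi\to I_i\neg A_i\varphi$; $A_ip\wedge p\to[\approx]_ip$; for $\Box\in\{I_i,[\approx]_i\}$: $\Box(\varphi\to\psi)\to(\Box\varphi\to\Box\psi)$, $\Box\varphi\to\varphi$, $\neg\Box\varphi\to\Box\neg\Box\varphi$; $[\circ^+]_i(\varphi\to\psi)\to([\circ^+]_i\varphi\to[\circ^+]_i\psi)$; $[\circ^+]_i\varphi\to\varphi\wedge[\approx]_iI_i[\circ^+]_i\varphi$; $[\circ^+]_i(\varphi\to[\approx]_iI_i\varphi)\to(\varphi\to[\circ^+]_i\varphi)$; $E_i\varphi\leftrightarrow A_i\varphi\wedge[\circ^+]_i\varphi$;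 rules: modus ponens, necessitation for $I_i,[\approx]_i,[\circ^+]_i$. $\Gamma\vdash\varphi$ iff $\vdash\bigwedge\Gamma'\to\varphi$ for some finite $\Gamma'\subseteq\Gamma$. $cl(\varphi_0)$ is the smallest set containing $\varphi_0$ closed under: subformulas; $\neg\psi$ for non-negations $\psi$; $A_i\psi\Rightarrow A_i\chi$ for subformulas $\chi$ of $\psi$; $A_i\psi\Rightarrow I_iA_i\psi,I_i\neg A_i\psi,[\approx]_ip$ for atoms $p$ in $\psi$; $I_i\psi\Rightarrow I_iI_i\psi,I_i\neg I_i\psi$ unless $\psi$ is $I_i\chi$ or $\neg I_i\chi$; analogously for $[\approx]_i$; $[\circ^+]_i\psi\Rightarrow[\approx]_iI_i[\circ^+]_i\psi$; $E_i\psi\Rightarrow A_i\psi,[\circ^+]_i\psi$. The canonical model for $\Phi$: $W^*$ = set of maximal consistent sets in $\Phi$ (subsets $\Gamma\subseteq\Phi$ with $\Gamma\nvdash\bot$ not properly extendable within $\Phi$); $(\Gamma,\Delta)\in\sim_i^*$ iff $\{\psi:I_i\psi\in\Gamma\}\subseteq\Delta$; $(\Gamma,\Delta)\in\approx_i^*$ iff $\{\psi:[\approx]_i\psi\in\Gamma\}\subseteq\Delta$; $V^*(p)=\{\Gamma:p\in\Gamma\}$; $\mathscr{A}_i^*(\Gamma)=\{p:A_ip\in\Gamma\}$. Satisfaction in $M^*$: $p$ iff $w\in V^*(p)$; Boolean usual; $A_i\varphi$ iff every atom occurring in $\varphi$ is in $\mathscr{A}_i^*(w)$; $I_i\varphi$,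 $[\approx]_i\varphi$, $[\circ^+]_i\varphi$ iff $\varphi$ holds at every $v$ with $(w,v)$ in $\sim_i^*$, $\approx_i^*$, $(\sim_i^*\circ\approx_i^* )^+$ respectively, where $\sim_i^*\circ\approx_i^*=\{(w,v):\exists t\,((w,t)\in\approx_i^*,(t,v)\in\sim_i^* )\}$ and $^+$ is transitive closure; $E_i\varphi$ iff $A_i\varphi$ and $[\circ^+]_i\varphi$ hold at $w$. *)

theory Defs
  imports Main "HOL-Library.Countable"
begin

text \<open>Atoms of type 'a (countable), agents of type 'g (finite).
  FA i = A_i (awareness), FI i = I_i, FE i = E_i, FSim i = [approx]_i, FCirc i = [circ^+]_i.\<close>

datatype ('a, 'g) fm =
    FAtom 'a
  | FNeg "('a, 'g) fm"
  | FConj "('a, 'g) fm" "('a, 'g) fm"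
  | FA 'g "('a, 'g) fm"
  | FI 'g "('a, 'g) fm"
  | FE 'g "('a, 'g) fm"
  | FSim 'g "('a, 'g) fm"
  | FCirc 'g "('a, 'g) fm"

abbreviation FImp :: "('a, 'g) fm \<Rightarrow> ('a, 'g) fm \<Rightarrow> ('a, 'g) fm" where
  "FImp \<phi> \<psi> \<equiv> FNeg (FConj \<phi> (FNeg \<psi>))"

abbreviation FIff :: "('a, 'g) fm \<Rightarrow> ('a, 'g) fm \<Rightarrow> ('a, 'g) fm" where
  "FIff \<phi> \<psi> \<equiv> FConj (FImp \<phi> \<psi>) (FImp \<psi> \<phi>)"

definition FBot :: "('a, 'g) fm" where
  "FBot = FConj (FAtom undefined) (FNeg (FAtom undefined))"

definition FTop :: "('a, 'g) fm" where
  "FTop = FNeg FBot"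

primrec atoms :: "('a, 'g) fm \<Rightarrow> 'a set" where
  "atoms (FAtom p) = {p}"
| "atoms (FNeg \<phi>) = atoms \<phi>"
| "atoms (FConj \<phi> \<psi>) = atoms \<phi> \<union> atoms \<psi>"
| "atoms (FA i \<phi>) = atoms \<phi>"
| "atoms (FI i \<phi>) = atoms \<phi>"
| "atoms (FE i \<phi>) = atoms \<phi>"
| "atoms (FSim i \<phi>) = atoms \<phi>"
| "atoms (FCirc i \<phi>) = atoms \<phi>"

primrec subs :: "('a, 'g) fm \<Rightarrow> ('a, 'g) fm set" where
  "subs (FAtom p) = {FAtom p}"
| "subs (FNeg \<phi>) = insert (FNeg \<phi>) (subs \<phi>)"
| "subs (FConj \<phi> \<psi>) = insert (FConj \<phi> \<psi>) (subs \<phi> \<union> subs \<psi>)"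
| "subs (FA i \<phi>) = insert (FA i \<phi>) (subs \<phi>)"
| "subs (FI i \<phi>) = insert (FI i \<phi>) (subs \<phi>)"
| "subs (FE i \<phi>) = insert (FE i \<phi>) (subs \<phi>)"
| "subs (FSim i \<phi>) = insert (FSim i \<phi>) (subs \<phi>)"
| "subs (FCirc i \<phi>) = insert (FCirc i \<phi>) (subs \<phi>)"

text \<open>Propositional evaluation: all non-Boolean formulas are treated as propositional letters.\<close>
primrec peval :: "(('a, 'g) fm \<Rightarrow> bool) \<Rightarrow> ('a, 'g) fm \<Rightarrow> bool" where
  "peval h (FAtom p) = h (FAtom p)"
| "peval h (FNeg \<phi>) = (\<not> peval h \<phi>)"
| "peval h (FConj \<phi> \<psi>) = (peval h \<phi> \<and> peval h \<psi>)"
| "peval h (FA i \<phi>) = h (FA i \<phi>)"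
| "peval h (FI i \<phi>) = h (FI i \<phi>)"
| "peval h (FE i \<phi>) = h (FE i \<phi>)"
| "peval h (FSim i \<phi>) = h (FSim i \<phi>)"
| "peval h (FCirc i \<phi>) = h (FCirc i \<phi>)"

definition tautology :: "('a, 'g) fm \<Rightarrow> bool" where
  "tautology \<phi> \<longleftrightarrow> (\<forall>h. peval h \<phi>)"

inductive AIL :: "('a, 'g) fm \<Rightarrow> bool" where
  Taut: "tautology \<phi> \<Longrightarrow> AIL \<phi>"
| A_neg: "AIL (FIff (FA i \<phi>) (FA i (FNeg \<phi>)))"
| A_conj: "AIL (FIff (FA i (FConj \<phi> \<psi>)) (FConj (FA i \<phi>) (FA i \<psi>)))"
| A_op: "Op \<in> {FA j, FI j, FSim j, FCirc j, FE j} \<Longrightarrow> AIL (FIff (FA i \<phi>) (FA i (Op \<phi>)))"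
| A_intro: "AIL (FImp (FA i \<phi>) (FI i (FA i \<phi>)))"
| NA_intro: "AIL (FImp (FNeg (FA i \<phi>)) (FI i (FNeg (FA i \<phi>))))"
| A_sim: "AIL (FImp (FConj (FA i (FAtom p)) (FAtom p)) (FSim i (FAtom p)))"
| K_box: "B \<in> {FI i, FSim i} \<Longrightarrow> AIL (FImp (B (FImp \<phi> \<psi>)) (FImp (B \<phi>) (B \<psi>)))"
| T_box: "B \<in> {FI i, FSim i} \<Longrightarrow> AIL (FImp (B \<phi>) \<phi>)"
| Five_box: "B \<in> {FI i, FSim i} \<Longrightarrow> AIL (FImp (FNeg (B \<phi>)) (B (FNeg (B \<phi>))))"
| K_circ: "AIL (FImp (FCirc i (FImp \<phi> \<psi>)) (FImp (FCirc i \<phi>) (FCirc i \<psi>)))"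
| Circ_mix: "AIL (FImp (FCirc i \<phi>) (FConj \<phi> (FSim i (FI i (FCirc i \<phi>)))))"
| Circ_ind: "AIL (FImp (FCirc i (FImp \<phi> (FSim i (FI i \<phi>)))) (FImp \<phi> (FCirc i \<phi>)))"
| E_def: "AIL (FIff (FE i \<phi>) (FConj (FA i \<phi>) (FCirc i \<phi>)))"
| MP: "AIL (FImp \<phi> \<psi>) \<Longrightarrow> AIL \<phi> \<Longrightarrow> AIL \<psi>"
| Nec_I: "AIL \<phi> \<Longrightarrow> AIL (FI i \<phi>)"
| Nec_Sim: "AIL \<phi> \<Longrightarrow> AIL (FSim i \<phi>)"
| Nec_Circ: "AIL \<phi> \<Longrightarrow> AIL (FCirc i \<phi>)"

primrec conjs :: "('a, 'g) fm list \<Rightarrow> ('a, 'g) fm" where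
  "conjs [] = FTop"
| "conjs (\<phi> # L) = FConj \<phi> (conjs L)"

definition derives :: "('a, 'g) fm set \<Rightarrow> ('a, 'g) fm \<Rightarrow> bool" where
  "derives \<Gamma> \<phi> \<longleftrightarrow> (\<exists>L. set L \<subseteq> \<Gamma> \<and> AIL (FImp (conjs L) \<phi>))"

definition consistent :: "('a, 'g) fm set \<Rightarrow> bool" where
  "consistent \<Gamma> \<longleftrightarrow> \<not> derives \<Gamma> FBot"

definition mcs_in :: "('a, 'g) fm set \<Rightarrow> ('a, 'g) fm set \<Rightarrow> bool" where
  "mcs_in \<Phi> \<Gamma> \<longleftrightarrow> \<Gamma> \<subseteq> \<Phi> \<and> consistent \<Gamma> \<and>
     (\<forall>\<Delta>. \<Gamma> \<subset> \<Delta> \<and> \<Delta> \<subseteq> \<Phi> \<longrightarrow> \<not> consistent \<Delta>)"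

fun is_neg :: "('a, 'g) fm \<Rightarrow> bool" where
  "is_neg (FNeg _) = True"
| "is_neg _ = False"

inductive_set cl :: "('a, 'g) fm \<Rightarrow> ('a, 'g) fm set" for \<phi>0 :: "('a, 'g) fm" where
  base: "\<phi>0 \<in> cl \<phi>0"
| sub: "\<psi> \<in> cl \<phi>0 \<Longrightarrow> \<chi> \<in> subs \<psi> \<Longrightarrow> \<chi> \<in> cl \<phi>0"
| neg: "\<psi> \<in> cl \<phi>0 \<Longrightarrow> \<not> is_neg \<psi> \<Longrightarrow> FNeg \<psi> \<in> cl \<phi>0"
| A_sub: "FA i \<psi> \<in> cl \<phi>0 \<Longrightarrow> \<chi> \<in> subs \<psi> \<Longrightarrow> FA i \<chi> \<in> cl \<phi>0"
| A_I: "FA i \<psi> \<in> cl \<phi>0 \<Longrightarrow> FI i (FA i \<psi>) \<in> cl \<phi>0"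
| A_INA: "FA i \<psi> \<in> cl \<phi>0 \<Longrightarrow> FI i (FNeg (FA i \<psi>)) \<in> cl \<phi>0"
| A_Sim: "FA i \<psi> \<in> cl \<phi>0 \<Longrightarrow> p \<in> atoms \<psi> \<Longrightarrow> FSim i (FAtom p) \<in> cl \<phi>0"
| I_II: "FI i \<psi> \<in> cl \<phi>0 \<Longrightarrow> \<forall>\<chi>. \<psi> \<noteq> FI i \<chi> \<and> \<psi> \<noteq> FNeg (FI i \<chi>) \<Longrightarrow>
           FI i (FI i \<psi>) \<in> cl \<phi>0"
| I_INI: "FI i \<psi> \<in> cl \<phi>0 \<Longrightarrow> \<forall>\<chi>. \<psi> \<noteq> FI i \<chi> \<and> \<psi> \<noteq> FNeg (FI i \<chi>) \<Longrightarrow>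
           FI i (FNeg (FI i \<psi>)) \<in> cl \<phi>0"
| Sim_SS: "FSim i \<psi> \<in> cl \<phi>0 \<Longrightarrow> \<forall>\<chi>. \<psi> \<noteq> FSim i \<chi> \<and> \<psi> \<noteq> FNeg (FSim i \<chi>) \<Longrightarrow>
           FSim i (FSim i \<psi>) \<in> cl \<phi>0"
| Sim_SNS: "FSim i \<psi> \<in> cl \<phi>0 \<Longrightarrow> \<forall>\<chi>. \<psi> \<noteq> FSim i \<chi> \<and> \<psi> \<noteq> FNeg (FSim i \<chi>) \<Longrightarrow>
           FSim i (FNeg (FSim i \<psi>)) \<in> cl \<phi>0"
| Circ_SIC: "FCirc i \<psi> \<in> cl \<phi>0 \<Longrightarrow> FSim i (FI i (FCirc i \<psi>)) \<in> cl \<phi>0"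
| E_A: "FE i \<psi> \<in> cl \<phi>0 \<Longrightarrow> FA i \<psi> \<in> cl \<phi>0"
| E_Circ: "FE i \<psi> \<in> cl \<phi>0 \<Longrightarrow> FCirc i \<psi> \<in> cl \<phi>0"

record ('a, 'g, 'w) model =
  mW :: "'w set"
  mSim :: "'g \<Rightarrow> ('w \<times> 'w) set"
  mApp :: "'g \<Rightarrow> ('w \<times> 'w) set"
  mV :: "'a \<Rightarrow> 'w set"
  mAw :: "'g \<Rightarrow> 'w \<Rightarrow> 'a set"

primrec sat :: "('a, 'g, 'w) model \<Rightarrow> 'w \<Rightarrow> ('a, 'g) fm \<Rightarrow> bool" where
  "sat M w (FAtom p) = (w \<in> mV M p)"
| "sat M w (FNeg \<phi>) = (\<not> sat M w \<phi>)"
| "sat M w (FConj \<phi> \<psi>) = (sat M w \<phi> \<and> sat M w \<psi>)"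
| "sat M w (FA i \<phi>) = (atoms \<phi> \<subseteq> mAw M i w)"
| "sat M w (FI i \<phi>) = (\<forall>v. (w, v) \<in> mSim M i \<longrightarrow> sat M v \<phi>)"
| "sat M w (FSim i \<phi>) = (\<forall>v. (w, v) \<in> mApp M i \<longrightarrow> sat M v \<phi>)"
| "sat M w (FCirc i \<phi>) = (\<forall>v. (w, v) \<in> (mApp M i O mSim M i)\<^sup>+ \<longrightarrow> sat M v \<phi>)"
| "sat M w (FE i \<phi>) = (atoms \<phi> \<subseteq> mAw M i w \<and>
      (\<forall>v. (w, v) \<in> (mApp M i O mSim M i)\<^sup>+ \<longrightarrow> sat M v \<phi>))"

definition canon :: "('a, 'g) fm set \<Rightarrow> ('a, 'g, ('a, 'g) fm set) model" where
  "canon \<Phi> = \<lparr>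
     mW = {\<Gamma>. mcs_in \<Phi> \<Gamma>},
     mSim = (\<lambda>i. {(\<Gamma>, \<Delta>). mcs_in \<Phi> \<Gamma> \<and> mcs_in \<Phi> \<Delta> \<and> {\<psi>. FI i \<psi> \<in> \<Gamma>} \<subseteq> \<Delta>}),
     mApp = (\<lambda>i. {(\<Gamma>, \<Delta>). mcs_in \<Phi> \<Gamma> \<and> mcs_in \<Phi> \<Delta> \<and> {\<psi>. FSim i \<psi> \<in> \<Gamma>} \<subseteq> \<Delta>}),
     mV = (\<lambda>p. {\<Gamma>. mcs_in \<Phi> \<Gamma> \<and> FAtom p \<in> \<Gamma>}),
     mAw = (\<lambda>i \<Gamma>. {p. FA i (FAtom p) \<in> \<Gamma>})
   \<rparr>"

end

theory Submission
  imports Defs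
begin


lemma peval_FTop[simp]: "peval h FTop" by (simp add: FTop_def FBot_def)
lemma peval_FBot[simp]: "\<not> peval h FBot" by (simp add: FBot_def)
lemma peval_conjs[simp]: "peval h (conjs L) = (\<forall>x\<in>set L. peval h x)"
  by (induction L) auto

lemma AIL_taut: "(\<And>h. peval h \<phi>) \<Longrightarrow> AIL \<phi>"
  by (rule AIL.Taut) (simp add: tautology_def)

lemma AIL_prop:
  "\<forall>x\<in>set Ps. AIL x \<Longrightarrow> (\<And>h. \<forall>x\<in>set Ps. peval h x \<Longrightarrow> peval h c) \<Longrightarrow> AIL c"
proof (induction Ps arbitrary: c)
  case Nil
  then show ?case by (intro AIL_taut) simp
next
  case (Cons x Ps)
  have "AIL (FImp x c)" using Cons.prems by (intro Cons.IH) auto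
  then show ?case using Cons.prems(1) AIL.MP by auto
qed

lemma derives_mem: "\<phi> \<in> \<Gamma> \<Longrightarrow> derives \<Gamma> \<phi>"
  unfolding derives_def by (rule exI[of _ "[\<phi>]"]) (simp add: AIL_taut)

lemma derives_AIL: "AIL \<phi> \<Longrightarrow> derives \<Gamma> \<phi>"
  unfolding derives_def 
  by (rule exI[of _ "[]"], simp, rule AIL_prop[of "[\<phi>]"]) auto

lemma derives_mono: "derives \<Gamma> \<phi> \<Longrightarrow> \<Gamma> \<subseteq> \<Delta> \<Longrightarrow> derives \<Delta> \<phi>"
  unfolding derives_def by blast

lemma derives_MP: "derives \<Gamma> (FImp a b) \<Longrightarrow> derives \<Gamma> a \<Longrightarrow> derives \<Gamma> b"
proof -
  assume "derives \<Gamma> (FImp a b)" "derives \<Gamma> a"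
  then obtain L1 L2 where L: "set L1 \<subseteq> \<Gamma>" "AIL (FImp (conjs L1) (FImp a b))"
     "set L2 \<subseteq> \<Gamma>" "AIL (FImp (conjs L2) a)" unfolding derives_def by blast
  have "AIL (FImp (conjs (L1 @ L2)) b)"
    by (rule AIL_prop[of "[FImp (conjs L1) (FImp a b), FImp (conjs L2) a]"]) (use L in auto)
  then show ?thesis unfolding derives_def using L by (intro exI[of _ "L1 @ L2"]) auto
qed

lemma derives_prop:
  "\<forall>x\<in>set Ps. derives \<Gamma> x \<Longrightarrow> (\<And>h. \<forall>x\<in>set Ps. peval h x \<Longrightarrow> peval h c) \<Longrightarrow> derives \<Gamma> c"
proof (induction Ps arbitrary: c)
  case Nil
  then have "AIL c" by (intro AIL_taut) simp
  then show ?case by (rule derives_AIL)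
next
  case (Cons x Ps)
  have "derives \<Gamma> (FImp x c)" using Cons.prems by (intro Cons.IH) auto
  then show ?case using Cons.prems(1) derives_MP by auto
qed

lemma derives_conjs: "set L \<subseteq> \<Gamma> \<Longrightarrow> derives \<Gamma> (conjs L)"
  unfolding derives_def by (rule exI[of _ L]) (auto intro!: AIL_taut)

lemma deduction: "derives (insert a \<Gamma>) b \<Longrightarrow> derives \<Gamma> (FImp a b)"
proof -
  assume "derives (insert a \<Gamma>) b"
  then obtain L where L: "set L \<subseteq> insert a \<Gamma>" "AIL (FImp (conjs L) b)" unfolding derives_def by blast
  let ?L = "filter (\<lambda>x. x \<noteq> a) L"
  have "AIL (FImp (conjs ?L) (FImp a b))"
    by (rule AIL_prop[of "[FImp (conjs L) b]"]) (use L in auto)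
  then show ?thesis unfolding derives_def using L by (intro exI[of _ ?L]) auto
qed

lemma derives_empty: "derives {} \<phi> \<Longrightarrow> AIL \<phi>"
  unfolding derives_def by (auto intro: AIL_prop[of "[FImp FTop \<phi>]"])

lemma consistent_mono: "consistent B \<Longrightarrow> A \<subseteq> B \<Longrightarrow> consistent A"
  unfolding consistent_def using derives_mono by blast

lemma incons: "derives \<Gamma> a \<Longrightarrow> derives \<Gamma> (FNeg a) \<Longrightarrow> \<not> consistent \<Gamma>"
  unfolding consistent_def by (rule notI, erule notE, rule derives_prop[of "[a, FNeg a]"]) auto

lemma consistent_insert: "consistent \<Gamma> \<Longrightarrow> derives \<Gamma> a \<Longrightarrow> consistent (insert a \<Gamma>)"
  unfolding consistent_def using deduction derives_MP by blast

lemma incons_insert: "\<not> consistent (insert a \<Gamma>) \<Longrightarrow> derives \<Gamma> (FNeg a)"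
proof -
  assume "\<not> consistent (insert a \<Gamma>)"
  then have "derives \<Gamma> (FImp a FBot)" unfolding consistent_def by (intro deduction) simp
  then show ?thesis by (intro derives_prop[of "[FImp a FBot]"]) auto
qed

lemma incons_insert_neg: "\<not> consistent (insert (FNeg a) \<Gamma>) \<Longrightarrow> derives \<Gamma> a"
proof -
  assume "\<not> consistent (insert (FNeg a) \<Gamma>)"
  then have "derives \<Gamma> (FNeg (FNeg a))" by (rule incons_insert)
  then show ?thesis by (intro derives_prop[of "[FNeg (FNeg a)]"]) auto
qed

lemma derives_conj: "derives \<Gamma> (FConj a b) \<longleftrightarrow> derives \<Gamma> a \<and> derives \<Gamma> b"
proof
  assume "derives \<Gamma> (FConj a b)"
  then have "derives \<Gamma> a" by (intro derives_prop[of "[FConj a b]"]) auto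
  moreover have "derives \<Gamma> b" using \<open>derives \<Gamma> (FConj a b)\<close> by (intro derives_prop[of "[FConj a b]"]) auto
  ultimately show "derives \<Gamma> a \<and> derives \<Gamma> b" by blast
next
  assume "derives \<Gamma> a \<and> derives \<Gamma> b"
  then show "derives \<Gamma> (FConj a b)" by (intro derives_prop[of "[a, b]"]) auto
qed

lemma derives_imp: "AIL (FImp a b) \<Longrightarrow> derives \<Gamma> a \<Longrightarrow> derives \<Gamma> b"
  using derives_AIL derives_MP by blast

lemma derives_iff: "AIL (FIff a b) \<Longrightarrow> derives \<Gamma> a \<longleftrightarrow> derives \<Gamma> b"
proof -
  assume h: "AIL (FIff a b)"
  have "AIL (FImp a b)" by (rule AIL_prop[of "[FIff a b]"]) (use h in auto)
  moreover have "AIL (FImp b a)" by (rule AIL_prop[of "[FIff a b]"]) (use h in auto)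
  ultimately show ?thesis using derives_imp by blast
qed

lemma mcs_derives: "mcs_in \<Phi> \<Gamma> \<Longrightarrow> \<psi> \<in> \<Phi> \<Longrightarrow> derives \<Gamma> \<psi> \<Longrightarrow> \<psi> \<in> \<Gamma>"
  unfolding mcs_in_def using consistent_insert by blast

lemma mcs_mem_iff: "mcs_in \<Phi> \<Gamma> \<Longrightarrow> \<psi> \<in> \<Phi> \<Longrightarrow> \<psi> \<in> \<Gamma> \<longleftrightarrow> derives \<Gamma> \<psi>"
  using mcs_derives derives_mem by blast

lemma mcs_not: "mcs_in \<Phi> \<Gamma> \<Longrightarrow> \<psi> \<in> \<Phi> \<Longrightarrow> \<psi> \<notin> \<Gamma> \<Longrightarrow> derives \<Gamma> (FNeg \<psi>)"
  unfolding mcs_in_def by (intro incons_insert) blast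

lemma mcs_cons: "mcs_in \<Phi> \<Gamma> \<Longrightarrow> consistent \<Gamma>"
  unfolding mcs_in_def by blast



lemma subs_refl[simp]: "\<phi> \<in> subs \<phi>"
  by (cases \<phi>) auto

lemma subs_trans: "\<chi> \<in> subs \<psi> \<Longrightarrow> \<theta> \<in> subs \<chi> \<Longrightarrow> \<theta> \<in> subs \<psi>"
  by (induction \<psi>) auto

lemma finite_subs[simp]: "finite (subs \<phi>)"
  by (induction \<phi>) auto

lemma atoms_subs: "p \<in> atoms \<phi> \<Longrightarrow> FAtom p \<in> subs \<phi>"
  by (induction \<phi>) auto

lemma subs_atoms: "\<chi> \<in> subs \<psi> \<Longrightarrow> atoms \<chi> \<subseteq> atoms \<psi>"
  by (induction \<psi>) auto

definition nneg :: "('a, 'g) fm \<Rightarrow> ('a, 'g) fm" where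
  "nneg \<psi> = (case \<psi> of FNeg \<chi> \<Rightarrow> \<chi> | _ \<Rightarrow> FNeg \<psi>)"

lemma peval_nneg[simp]: "peval h (nneg \<psi>) = (\<not> peval h \<psi>)"
  by (cases \<psi>) (auto simp: nneg_def)

lemma cl_sub: "\<psi> \<in> cl \<phi>0 \<Longrightarrow> \<chi> \<in> subs \<psi> \<Longrightarrow> \<chi> \<in> cl \<phi>0"
  by (rule cl.sub)

lemma nneg_cl: "\<psi> \<in> cl \<phi>0 \<Longrightarrow> nneg \<psi> \<in> cl \<phi>0"
  by (cases \<psi>) (auto simp: nneg_def intro: cl.neg cl_sub)

lemma derives_nneg: "derives \<Gamma> (FNeg \<psi>) \<longleftrightarrow> derives \<Gamma> (nneg \<psi>)"
  by (auto intro: derives_prop[of "[FNeg \<psi>]"] derives_prop[of "[nneg \<psi>]"])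

lemma mcs_complete: "mcs_in (cl \<phi>0) \<Gamma> \<Longrightarrow> \<psi> \<in> cl \<phi>0 \<Longrightarrow> \<psi> \<in> \<Gamma> \<or> nneg \<psi> \<in> \<Gamma>"
  using mcs_not mcs_derives nneg_cl derives_nneg by metis

lemma incons_nneg: "derives \<Gamma> \<psi> \<Longrightarrow> derives \<Gamma> (nneg \<psi>) \<Longrightarrow> \<not> consistent \<Gamma>"
  using incons derives_nneg by blast

lemma lind_aux:
  assumes "finite F" "consistent Z"
  shows "\<exists>D. D \<subseteq> F \<union> nneg ` F \<and> consistent (Z \<union> D) \<and> (\<forall>\<psi>\<in>F. \<psi> \<in> D \<or> nneg \<psi> \<in> D)"
  using assms(1)
proof (induction F rule: finite_induct)
  case empty
  then show ?case using assms(2) by auto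
next
  case (insert \<psi> F)
  then obtain D where D: "D \<subseteq> F \<union> nneg ` F" "consistent (Z \<union> D)" "\<forall>\<psi>\<in>F. \<psi> \<in> D \<or> nneg \<psi> \<in> D"
    by blast
  show ?case
  proof (cases "consistent (insert \<psi> (Z \<union> D))")
    case True
    then show ?thesis using D by (intro exI[of _ "insert \<psi> D"]) auto
  next
    case False
    then have "derives (Z \<union> D) (nneg \<psi>)" using incons_insert derives_nneg by blast
    then have "consistent (insert (nneg \<psi>) (Z \<union> D))" using D(2) consistent_insert by blast
    then show ?thesis using D by (intro exI[of _ "insert (nneg \<psi>) D"]) auto
  qed
qed



definition clC :: "('a, 'g) fm \<Rightarrow> ('a, 'g) fm set" where
  "clC \<phi>0 = subs \<phi>0 \<union> (\<Union>i. FA i ` subs \<phi>0) \<union> (\<Union>i. FCirc i ` subs \<phi>0)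
    \<union> (\<Union>i. (\<lambda>p. FSim i (FAtom p)) ` atoms \<phi>0)
    \<union> (\<Union>i. (\<lambda>\<chi>. FI i (FCirc i \<chi>)) ` subs \<phi>0)
    \<union> (\<Union>i. (\<lambda>\<chi>. FSim i (FI i (FCirc i \<chi>))) ` subs \<phi>0)
    \<union> (\<Union>i. (\<lambda>\<chi>. FI i (FA i \<chi>)) ` subs \<phi>0)
    \<union> (\<Union>i. (\<lambda>\<chi>. FNeg (FA i \<chi>)) ` subs \<phi>0)
    \<union> (\<Union>i. (\<lambda>\<chi>. FI i (FNeg (FA i \<chi>))) ` subs \<phi>0)"

definition clB :: "('a, 'g) fm \<Rightarrow> ('a, 'g) fm set" where
  "clB \<phi>0 = clC \<phi>0
    \<union> (\<Union>i. (\<lambda>\<theta>. FI i (FI i \<theta>)) ` (FI i -` clC \<phi>0))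
    \<union> (\<Union>i. (\<lambda>\<theta>. FNeg (FI i \<theta>)) ` (FI i -` clC \<phi>0))
    \<union> (\<Union>i. (\<lambda>\<theta>. FI i (FNeg (FI i \<theta>))) ` (FI i -` clC \<phi>0))
    \<union> (\<Union>i. (\<lambda>\<theta>. FSim i (FSim i \<theta>)) ` (FSim i -` clC \<phi>0))
    \<union> (\<Union>i. (\<lambda>\<theta>. FNeg (FSim i \<theta>)) ` (FSim i -` clC \<phi>0))
    \<union> (\<Union>i. (\<lambda>\<theta>. FSim i (FNeg (FSim i \<theta>))) ` (FSim i -` clC \<phi>0))"

definition clS :: "('a, 'g) fm \<Rightarrow> ('a, 'g) fm set" where
  "clS \<phi>0 = clB \<phi>0 \<union> FNeg ` clB \<phi>0"

lemma finite_atoms[simp]: "finite (atoms \<phi>)"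
  by (induction \<phi>) auto

lemma finite_clC: "finite (clC (\<phi>0 :: ('a, 'g::finite) fm))"
  unfolding clC_def by auto

lemma finite_clB: "finite (clB (\<phi>0 :: ('a, 'g::finite) fm))"
  using finite_clC[of \<phi>0] unfolding clB_def
  by (auto intro!: finite_vimageI simp: inj_on_def)

lemma finite_clS: "finite (clS (\<phi>0 :: ('a, 'g::finite) fm))"
  using finite_clB[of \<phi>0] unfolding clS_def by auto

lemma clC_clS0: "x \<in> clC \<phi>0 \<Longrightarrow> x \<in> clS \<phi>0"
  unfolding clS_def clB_def by (intro UnI1)

lemma mem_clS0: "x \<in> subs \<phi>0 \<Longrightarrow> x \<in> clS \<phi>0"
  by (rule clC_clS0) (auto simp: clC_def)

lemma mem_clS1: "x \<in> subs \<phi>0 \<Longrightarrow> FA i x \<in> clS \<phi>0"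
  by (rule clC_clS0) (auto simp: clC_def)

lemma mem_clS2: "x \<in> subs \<phi>0 \<Longrightarrow> FCirc i x \<in> clS \<phi>0"
  by (rule clC_clS0) (auto simp: clC_def)

lemma mem_clS3: "p \<in> atoms \<phi>0 \<Longrightarrow> FSim i (FAtom p) \<in> clS \<phi>0"
  by (rule clC_clS0) (auto simp: clC_def)

lemma mem_clS4: "x \<in> subs \<phi>0 \<Longrightarrow> FI i (FCirc i x) \<in> clS \<phi>0"
  by (rule clC_clS0) (auto simp: clC_def)

lemma mem_clS5: "x \<in> subs \<phi>0 \<Longrightarrow> FSim i (FI i (FCirc i x)) \<in> clS \<phi>0"
  by (rule clC_clS0) (auto simp: clC_def)

lemma mem_clS6: "x \<in> subs \<phi>0 \<Longrightarrow> FI i (FA i x) \<in> clS \<phi>0"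
  by (rule clC_clS0) (auto simp: clC_def)

lemma mem_clS7: "x \<in> subs \<phi>0 \<Longrightarrow> FNeg (FA i x) \<in> clS \<phi>0"
  by (rule clC_clS0) (auto simp: clC_def)

lemma mem_clS8: "x \<in> subs \<phi>0 \<Longrightarrow> FI i (FNeg (FA i x)) \<in> clS \<phi>0"
  by (rule clC_clS0) (auto simp: clC_def)

lemmas mem_clS = mem_clS0 mem_clS1 mem_clS2 mem_clS3 mem_clS4 mem_clS5 mem_clS6 mem_clS7 mem_clS8

lemma clB_clS: "x \<in> clB \<phi>0 \<Longrightarrow> x \<in> clS \<phi>0"
  unfolding clS_def by (rule UnI1)

lemma negB_clS: "x \<in> clB \<phi>0 \<Longrightarrow> FNeg x \<in> clS \<phi>0"
  unfolding clS_def by blast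

lemma clS_cases: "x \<in> clS \<phi>0 \<Longrightarrow> x \<in> clB \<phi>0 \<or> (\<exists>y\<in>clB \<phi>0. x = FNeg y)"
  unfolding clS_def by blast

lemma clB_cases: "x \<in> clB \<phi>0 \<Longrightarrow> x \<in> clC \<phi>0 \<or>
   (\<exists>i \<theta>. FI i \<theta> \<in> clC \<phi>0 \<and> (x = FI i (FI i \<theta>) \<or> x = FNeg (FI i \<theta>) \<or> x = FI i (FNeg (FI i \<theta>)))) \<or>
   (\<exists>i \<theta>. FSim i \<theta> \<in> clC \<phi>0 \<and> (x = FSim i (FSim i \<theta>) \<or> x = FNeg (FSim i \<theta>) \<or> x = FSim i (FNeg (FSim i \<theta>))))"
  unfolding clB_def by blast

lemma memB0: "FI i \<theta> \<in> clC \<phi>0 \<Longrightarrow> FI i (FI i \<theta>) \<in> clS \<phi>0"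
  by (rule clB_clS) (simp add: clB_def image_iff vimage_def)

lemma memB1: "FI i \<theta> \<in> clC \<phi>0 \<Longrightarrow> FNeg (FI i \<theta>) \<in> clS \<phi>0"
  by (rule clB_clS) (simp add: clB_def image_iff vimage_def)

lemma memB2: "FI i \<theta> \<in> clC \<phi>0 \<Longrightarrow> FI i (FNeg (FI i \<theta>)) \<in> clS \<phi>0"
  by (rule clB_clS) (simp add: clB_def image_iff vimage_def)

lemma memB3: "FSim i \<theta> \<in> clC \<phi>0 \<Longrightarrow> FSim i (FSim i \<theta>) \<in> clS \<phi>0"
  by (rule clB_clS) (simp add: clB_def image_iff vimage_def)

lemma memB4: "FSim i \<theta> \<in> clC \<phi>0 \<Longrightarrow> FNeg (FSim i \<theta>) \<in> clS \<phi>0"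
  by (rule clB_clS) (simp add: clB_def image_iff vimage_def)

lemma memB5: "FSim i \<theta> \<in> clC \<phi>0 \<Longrightarrow> FSim i (FNeg (FSim i \<theta>)) \<in> clS \<phi>0"
  by (rule clB_clS) (simp add: clB_def image_iff vimage_def)

lemmas memB = memB0 memB1 memB2 memB3 memB4 memB5

lemma sub_clS: "x \<in> subs \<phi>0 \<Longrightarrow> \<chi> \<in> subs x \<Longrightarrow> \<chi> \<in> clS \<phi>0"
  using subs_trans mem_clS0 by blast

lemma atom_clS: "p \<in> atoms \<phi>0 \<Longrightarrow> FAtom p \<in> clS \<phi>0"
  by (rule mem_clS0[OF atoms_subs])

lemma clC_subs: "\<psi> \<in> clC \<phi>0 \<Longrightarrow> \<chi> \<in> subs \<psi> \<Longrightarrow> \<chi> \<in> clS \<phi>0"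
  unfolding clC_def
  by (elim UnE) (auto intro: sub_clS atom_clS simp: mem_clS)

lemma clB_subs: "\<psi> \<in> clB \<phi>0 \<Longrightarrow> \<chi> \<in> subs \<psi> \<Longrightarrow> \<chi> \<in> clS \<phi>0"
proof -
  assume a: "\<psi> \<in> clB \<phi>0" and b: "\<chi> \<in> subs \<psi>"
  from clB_cases[OF a] consider (C) "\<psi> \<in> clC \<phi>0"
    | (I) i \<theta> where "FI i \<theta> \<in> clC \<phi>0" "\<psi> = FI i (FI i \<theta>) \<or> \<psi> = FNeg (FI i \<theta>) \<or> \<psi> = FI i (FNeg (FI i \<theta>))"
    | (S) i \<theta> where "FSim i \<theta> \<in> clC \<phi>0" "\<psi> = FSim i (FSim i \<theta>) \<or> \<psi> = FNeg (FSim i \<theta>) \<or> \<psi> = FSim i (FNeg (FSim i \<theta>))"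
    by blast
  then show ?thesis
  proof cases
    case C then show ?thesis using b clC_subs by blast
  next
    case I
    have "\<chi> \<in> subs (FI i \<theta>) \<or> \<chi> = FI i (FI i \<theta>) \<or> \<chi> = FNeg (FI i \<theta>) \<or> \<chi> = FI i (FNeg (FI i \<theta>))"
      using I(2) b by auto
    then show ?thesis using clC_subs[OF I(1)] memB0[OF I(1)] memB1[OF I(1)] memB2[OF I(1)] by blast
  next
    case S
    have "\<chi> \<in> subs (FSim i \<theta>) \<or> \<chi> = FSim i (FSim i \<theta>) \<or> \<chi> = FNeg (FSim i \<theta>) \<or> \<chi> = FSim i (FNeg (FSim i \<theta>))"
      using S(2) b by auto
    then show ?thesis using clC_subs[OF S(1)] memB3[OF S(1)] memB4[OF S(1)] memB5[OF S(1)] by blast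
  qed
qed

lemma clS_subs: "\<psi> \<in> clS \<phi>0 \<Longrightarrow> \<chi> \<in> subs \<psi> \<Longrightarrow> \<chi> \<in> clS \<phi>0"
proof -
  assume a: "\<psi> \<in> clS \<phi>0" and b: "\<chi> \<in> subs \<psi>"
  from clS_cases[OF a] show ?thesis
  proof
    assume "\<psi> \<in> clB \<phi>0" then show ?thesis using b clB_subs by blast
  next
    assume "\<exists>y\<in>clB \<phi>0. \<psi> = FNeg y"
    then obtain y where y: "y \<in> clB \<phi>0" "\<psi> = FNeg y" by blast
    then have "\<chi> = FNeg y \<or> \<chi> \<in> subs y" using b by auto
    then show ?thesis using y(1) clB_subs negB_clS by blast
  qed
qed



lemma clC_FA: "FA i \<psi> \<in> clC \<phi>0 \<Longrightarrow> \<psi> \<in> subs \<phi>0"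
  by (cases "FA i \<psi> \<in> subs \<phi>0") (use subs_trans[of "FA i \<psi>" \<phi>0 \<psi>] in \<open>auto simp: clC_def\<close>)
lemma clC_FCirc: "FCirc i \<psi> \<in> clC \<phi>0 \<Longrightarrow> \<psi> \<in> subs \<phi>0"
  by (cases "FCirc i \<psi> \<in> subs \<phi>0") (use subs_trans[of "FCirc i \<psi>" \<phi>0 \<psi>] in \<open>auto simp: clC_def\<close>)
lemma clC_FE: "FE i \<psi> \<in> clC \<phi>0 \<Longrightarrow> \<psi> \<in> subs \<phi>0"
  by (cases "FE i \<psi> \<in> subs \<phi>0") (use subs_trans[of "FE i \<psi>" \<phi>0 \<psi>] in \<open>auto simp: clC_def\<close>)

lemma clS_nonneg: "x \<in> clS \<phi>0 \<Longrightarrow> \<not> is_neg x \<Longrightarrow> x \<in> clB \<phi>0"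
  by (drule clS_cases) auto

lemma clS_FA: "FA i \<psi> \<in> clS \<phi>0 \<Longrightarrow> \<psi> \<in> subs \<phi>0"
proof -
  assume "FA i \<psi> \<in> clS \<phi>0"
  then have "FA i \<psi> \<in> clB \<phi>0" by (rule clS_nonneg) simp
  then have "FA i \<psi> \<in> clC \<phi>0" using clB_cases[of "FA i \<psi>" \<phi>0] by simp
  then show ?thesis by (rule clC_FA)
qed

lemma clS_FCirc: "FCirc i \<psi> \<in> clS \<phi>0 \<Longrightarrow> \<psi> \<in> subs \<phi>0"
proof -
  assume "FCirc i \<psi> \<in> clS \<phi>0"
  then have "FCirc i \<psi> \<in> clB \<phi>0" by (rule clS_nonneg) simp
  then have "FCirc i \<psi> \<in> clC \<phi>0" using clB_cases[of "FCirc i \<psi>" \<phi>0] by simp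
  then show ?thesis by (rule clC_FCirc)
qed

lemma clS_FE: "FE i \<psi> \<in> clS \<phi>0 \<Longrightarrow> \<psi> \<in> subs \<phi>0"
proof -
  assume "FE i \<psi> \<in> clS \<phi>0"
  then have "FE i \<psi> \<in> clB \<phi>0" by (rule clS_nonneg) simp
  then have "FE i \<psi> \<in> clC \<phi>0" using clB_cases[of "FE i \<psi>" \<phi>0] by simp
  then show ?thesis by (rule clC_FE)
qed

lemma clS_FI: "FI i \<psi> \<in> clS \<phi>0 \<Longrightarrow> FI i \<psi> \<in> clC \<phi>0 \<or> (\<exists>\<theta>. \<psi> = FI i \<theta> \<or> \<psi> = FNeg (FI i \<theta>))"
proof -
  assume "FI i \<psi> \<in> clS \<phi>0"
  then have "FI i \<psi> \<in> clB \<phi>0" by (rule clS_nonneg) simp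
  then show ?thesis using clB_cases[of "FI i \<psi>" \<phi>0] by auto
qed
lemma clS_FSim: "FSim i \<psi> \<in> clS \<phi>0 \<Longrightarrow> FSim i \<psi> \<in> clC \<phi>0 \<or> (\<exists>\<theta>. \<psi> = FSim i \<theta> \<or> \<psi> = FNeg (FSim i \<theta>))"
proof -
  assume "FSim i \<psi> \<in> clS \<phi>0"
  then have "FSim i \<psi> \<in> clB \<phi>0" by (rule clS_nonneg) simp
  then show ?thesis using clB_cases[of "FSim i \<psi>" \<phi>0] by auto
qed

lemma clS_neg: "\<psi> \<in> clS \<phi>0 \<Longrightarrow> \<not> is_neg \<psi> \<Longrightarrow> FNeg \<psi> \<in> clS \<phi>0"
  using clS_nonneg negB_clS by blast

lemma cl_clS: "\<psi> \<in> cl \<phi>0 \<Longrightarrow> \<psi> \<in> clS \<phi>0"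
proof (induction rule: cl.induct)
  case base
  then show ?case by (rule mem_clS0) simp
next
  case (sub \<psi> \<chi>)
  then show ?case using clS_subs by blast
next
  case (neg \<psi>)
  then show ?case using clS_neg by blast
next
  case (A_sub i \<psi> \<chi>)
  show ?case by (rule mem_clS1[OF subs_trans[OF clS_FA[OF A_sub.IH] A_sub.hyps(2)]])
next
  case (A_I i \<psi>)
  show ?case by (rule mem_clS6[OF clS_FA[OF A_I.IH]])
next
  case (A_INA i \<psi>)
  show ?case by (rule mem_clS8[OF clS_FA[OF A_INA.IH]])
next
  case (A_Sim i \<psi> p)
  show ?case by (rule mem_clS3[OF subsetD[OF subs_atoms[OF clS_FA[OF A_Sim.IH]] A_Sim.hyps(2)]])
next
  case (I_II i \<psi>)
  have "FI i \<psi> \<in> clC \<phi>0" using clS_FI[OF I_II.IH] I_II.hyps(2) by auto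
  then show ?case by (rule memB0)
next
  case (I_INI i \<psi>)
  have "FI i \<psi> \<in> clC \<phi>0" using clS_FI[OF I_INI.IH] I_INI.hyps(2) by auto
  then show ?case by (rule memB2)
next
  case (Sim_SS i \<psi>)
  have "FSim i \<psi> \<in> clC \<phi>0" using clS_FSim[OF Sim_SS.IH] Sim_SS.hyps(2) by auto
  then show ?case by (rule memB3)
next
  case (Sim_SNS i \<psi>)
  have "FSim i \<psi> \<in> clC \<phi>0" using clS_FSim[OF Sim_SNS.IH] Sim_SNS.hyps(2) by auto
  then show ?case by (rule memB5)
next
  case (Circ_SIC i \<psi>)
  show ?case by (rule mem_clS5[OF clS_FCirc[OF Circ_SIC.IH]])
next
  case (E_A i \<psi>)
  show ?case by (rule mem_clS1[OF clS_FE[OF E_A.IH]])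
next
  case (E_Circ i \<psi>)
  show ?case by (rule mem_clS2[OF clS_FE[OF E_Circ.IH]])
qed

lemma finite_cl: "finite (cl (\<phi>0 :: ('a, 'g::finite) fm))"
  using finite_clS[of \<phi>0] cl_clS by (meson finite_subset subsetI)



lemma lind:
  fixes \<phi>0 :: "('a, 'g::finite) fm"
  assumes "consistent Z"
  shows "\<exists>\<Delta>. mcs_in (cl \<phi>0) \<Delta> \<and> consistent (Z \<union> \<Delta>)"
proof -
  obtain D where D: "D \<subseteq> cl \<phi>0 \<union> nneg ` cl \<phi>0" "consistent (Z \<union> D)"
    "\<forall>\<psi>\<in>cl \<phi>0. \<psi> \<in> D \<or> nneg \<psi> \<in> D"
    using lind_aux[OF finite_cl assms] by blast
  have D1: "D \<subseteq> cl \<phi>0" using D(1) nneg_cl by blast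
  have "mcs_in (cl \<phi>0) D"
    unfolding mcs_in_def
  proof (intro conjI allI impI)
    show "consistent D" using D(2) consistent_mono by blast
  next
    fix \<Delta> assume a: "D \<subset> \<Delta> \<and> \<Delta> \<subseteq> cl \<phi>0"
    then obtain \<psi> where "\<psi> \<in> \<Delta>" "\<psi> \<notin> D" by blast
    then have "nneg \<psi> \<in> \<Delta>" using D(3) a by blast
    then show "\<not> consistent \<Delta>" using incons_nneg derives_mem \<open>\<psi> \<in> \<Delta>\<close> by blast
  qed (use D1 in auto)
  then show ?thesis using D by blast
qed

lemma lind_mem:
  "mcs_in (cl \<phi>0) \<Delta> \<Longrightarrow> consistent (Z \<union> \<Delta>) \<Longrightarrow> \<chi> \<in> Z \<Longrightarrow> \<chi> \<in> cl \<phi>0 \<Longrightarrow> \<chi> \<in> \<Delta>"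
  using mcs_complete incons_nneg derives_mem by (metis UnI1 UnI2)

lemma box_derives:
  assumes K: "\<And>a b. AIL (FImp (B (FImp a b)) (FImp (B a) (B b)))"
    and N: "\<And>a. AIL a \<Longrightarrow> AIL (B a)"
  shows "set L \<subseteq> {\<psi>. B \<psi> \<in> \<Gamma>} \<Longrightarrow> AIL (FImp (conjs L) \<theta>) \<Longrightarrow> derives \<Gamma> (B \<theta>)"
proof (induction L arbitrary: \<theta>)
  case Nil
  then have "AIL \<theta>" by (auto intro: AIL_prop[of "[FImp FTop \<theta>]"])
  then show ?case using N derives_AIL by blast
next
  case (Cons a L)
  have "AIL (FImp (conjs L) (FImp a \<theta>))"
    using Cons.prems(2) by (auto intro: AIL_prop[of "[FImp (conjs (a # L)) \<theta>]"])
  then have "derives \<Gamma> (B (FImp a \<theta>))" using Cons by auto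
  then have "derives \<Gamma> (FImp (B a) (B \<theta>))" using K derives_imp by blast
  moreover have "derives \<Gamma> (B a)" using Cons.prems(1) derives_mem by auto
  ultimately show ?case using derives_MP by blast
qed

lemma exist_box:
  fixes \<phi>0 :: "('a, 'g::finite) fm"
  assumes K: "\<And>a b. AIL (FImp (B (FImp a b)) (FImp (B a) (B b)))"
    and N: "\<And>a. AIL a \<Longrightarrow> AIL (B a)"
    and sub: "\<And>\<psi>. B \<psi> \<in> cl \<phi>0 \<Longrightarrow> \<psi> \<in> cl \<phi>0"
    and G: "mcs_in (cl \<phi>0) \<Gamma>" and cons: "consistent (insert (FNeg (B \<theta>)) \<Gamma>)"
  shows "\<exists>\<Delta>. mcs_in (cl \<phi>0) \<Delta> \<and> {\<psi>. B \<psi> \<in> \<Gamma>} \<subseteq> \<Delta> \<and> consistent (insert (FNeg \<theta>) \<Delta>)"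
proof -
  let ?S = "{\<psi>. B \<psi> \<in> \<Gamma>}"
  have c: "consistent (insert (FNeg \<theta>) ?S)"
  proof (rule ccontr)
    assume "\<not> consistent (insert (FNeg \<theta>) ?S)"
    then have "derives ?S \<theta>" by (rule incons_insert_neg)
    then obtain L where "set L \<subseteq> ?S" "AIL (FImp (conjs L) \<theta>)" unfolding derives_def by blast
    then have "derives \<Gamma> (B \<theta>)" using box_derives[OF K N] by blast
    then have "derives (insert (FNeg (B \<theta>)) \<Gamma>) (B \<theta>)" by (rule derives_mono) auto
    then show False using cons incons derives_mem by blast
  qed
  obtain \<Delta> where D: "mcs_in (cl \<phi>0) \<Delta>" "consistent (insert (FNeg \<theta>) ?S \<union> \<Delta>)"
    using lind[OF c] by blast
  have "?S \<subseteq> \<Delta>"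
  proof
    fix \<psi> assume "\<psi> \<in> ?S"
    moreover then have "\<psi> \<in> cl \<phi>0" using G sub unfolding mcs_in_def by blast
    ultimately show "\<psi> \<in> \<Delta>" using lind_mem[OF D] by blast
  qed
  moreover have "consistent (insert (FNeg \<theta>) \<Delta>)" using D(2) consistent_mono by blast
  ultimately show ?thesis using D(1) by blast
qed

lemma canon_simps:
  "mW (canon \<Phi>) = {\<Gamma>. mcs_in \<Phi> \<Gamma>}"
  "mSim (canon \<Phi>) i = {(\<Gamma>, \<Delta>). mcs_in \<Phi> \<Gamma> \<and> mcs_in \<Phi> \<Delta> \<and> {\<psi>. FI i \<psi> \<in> \<Gamma>} \<subseteq> \<Delta>}"
  "mApp (canon \<Phi>) i = {(\<Gamma>, \<Delta>). mcs_in \<Phi> \<Gamma> \<and> mcs_in \<Phi> \<Delta> \<and> {\<psi>. FSim i \<psi> \<in> \<Gamma>} \<subseteq> \<Delta>}"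
  "mV (canon \<Phi>) p = {\<Gamma>. mcs_in \<Phi> \<Gamma> \<and> FAtom p \<in> \<Gamma>}"
  "mAw (canon \<Phi>) i \<Gamma> = {p. FA i (FAtom p) \<in> \<Gamma>}"
  by (simp_all add: canon_def)

lemma A_atoms: "derives \<Gamma> (FA i \<phi>) \<longleftrightarrow> (\<forall>p\<in>atoms \<phi>. derives \<Gamma> (FA i (FAtom p)))"
proof (induction \<phi>)
  case (FAtom x)
  then show ?case by simp
next
  case (FNeg \<phi>)
  then show ?case using derives_iff[OF AIL.A_neg[of i \<phi>]] by simp
next
  case (FConj \<phi>1 \<phi>2)
  then show ?case using derives_iff[OF AIL.A_conj[of i \<phi>1 \<phi>2]] derives_conj by auto
next
  case (FA j \<phi>)
  have "AIL (FIff (FA i \<phi>) (FA i (FA j \<phi>)))" by (rule AIL.A_op[where j=j]) simp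
  then show ?case using FA derives_iff by fastforce
next
  case (FI j \<phi>)
  have "AIL (FIff (FA i \<phi>) (FA i (FI j \<phi>)))" by (rule AIL.A_op[where j=j]) simp
  then show ?case using FI derives_iff by fastforce
next
  case (FE j \<phi>)
  have "AIL (FIff (FA i \<phi>) (FA i (FE j \<phi>)))" by (rule AIL.A_op[where j=j]) simp
  then show ?case using FE derives_iff by fastforce
next
  case (FSim j \<phi>)
  have "AIL (FIff (FA i \<phi>) (FA i (FSim j \<phi>)))" by (rule AIL.A_op[where j=j]) simp
  then show ?case using FSim derives_iff by fastforce
next
  case (FCirc j \<phi>)
  have "AIL (FIff (FA i \<phi>) (FA i (FCirc j \<phi>)))" by (rule AIL.A_op[where j=j]) simp
  then show ?case using FCirc derives_iff by fastforce
qed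

lemma truth_A:
  assumes w: "mcs_in (cl \<phi>0) w" and inC: "FA i \<phi> \<in> cl \<phi>0"
  shows "sat (canon (cl \<phi>0)) w (FA i \<phi>) \<longleftrightarrow> FA i \<phi> \<in> w"
proof -
  have at: "FA i (FAtom p) \<in> cl \<phi>0" if "p \<in> atoms \<phi>" for p
    using cl.A_sub[OF inC atoms_subs[OF that]] .
  have "sat (canon (cl \<phi>0)) w (FA i \<phi>) \<longleftrightarrow> (\<forall>p\<in>atoms \<phi>. FA i (FAtom p) \<in> w)"
    by (auto simp: canon_simps)
  also have "\<dots> \<longleftrightarrow> (\<forall>p\<in>atoms \<phi>. derives w (FA i (FAtom p)))"
  proof (intro ball_cong refl)
    fix p assume "p \<in> atoms \<phi>"
    show "FA i (FAtom p) \<in> w \<longleftrightarrow> derives w (FA i (FAtom p))" by (rule mcs_mem_iff[OF w at[OF \<open>p \<in> atoms \<phi>\<close>]])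
  qed
  also have "\<dots> \<longleftrightarrow> derives w (FA i \<phi>)" by (rule A_atoms[symmetric])
  also have "\<dots> \<longleftrightarrow> FA i \<phi> \<in> w" by (rule mcs_mem_iff[OF w inC, symmetric])
  finally show ?thesis .
qed

lemma truth_box:
  fixes \<phi>0 :: "('a, 'g::finite) fm"
  assumes K: "\<And>a b. AIL (FImp (B (FImp a b)) (FImp (B a) (B b)))"
    and N: "\<And>a. AIL a \<Longrightarrow> AIL (B a)"
    and sub: "\<And>\<psi>. B \<psi> \<in> cl \<phi>0 \<Longrightarrow> \<psi> \<in> cl \<phi>0"
    and IH: "\<And>v. mcs_in (cl \<phi>0) v \<Longrightarrow> P v \<longleftrightarrow> \<phi> \<in> v"
    and w: "mcs_in (cl \<phi>0) w" and inC: "B \<phi> \<in> cl \<phi>0"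
    and rel: "\<And>v. (w, v) \<in> Rel \<longleftrightarrow> mcs_in (cl \<phi>0) v \<and> {\<psi>. B \<psi> \<in> w} \<subseteq> v"
  shows "(\<forall>v. (w, v) \<in> Rel \<longrightarrow> P v) \<longleftrightarrow> B \<phi> \<in> w"
proof
  assume "B \<phi> \<in> w"
  then show "\<forall>v. (w, v) \<in> Rel \<longrightarrow> P v" using rel IH by blast
next
  assume H: "\<forall>v. (w, v) \<in> Rel \<longrightarrow> P v"
  show "B \<phi> \<in> w"
  proof (rule ccontr)
    assume nB: "B \<phi> \<notin> w"
    have "consistent (insert (FNeg (B \<phi>)) w)"
    proof (rule ccontr)
      assume "\<not> consistent (insert (FNeg (B \<phi>)) w)"
      then have "derives w (B \<phi>)" by (rule incons_insert_neg)
      then show False using nB mcs_derives[OF w inC] by blast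
    qed
    then obtain u where u: "mcs_in (cl \<phi>0) u" "{\<psi>. B \<psi> \<in> w} \<subseteq> u" "consistent (insert (FNeg \<phi>) u)"
      using exist_box[OF K N sub w] by blast
    then have "P u" using H rel by blast
    then have "\<phi> \<in> u" using IH u(1) by blast
    then show False using u(3) incons derives_mem by blast
  qed
qed



lemma truth_Circ:
  fixes \<phi>0 :: "('a, 'g::finite) fm"
  assumes IH: "\<And>v. mcs_in (cl \<phi>0) v \<Longrightarrow> sat (canon (cl \<phi>0)) v \<phi> \<longleftrightarrow> \<phi> \<in> v"
    and w: "mcs_in (cl \<phi>0) w" and inC: "FCirc i \<phi> \<in> cl \<phi>0"
  shows "sat (canon (cl \<phi>0)) w (FCirc i \<phi>) \<longleftrightarrow> FCirc i \<phi> \<in> w"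
proof -
  let ?\<Phi> = "cl \<phi>0"
  let ?M = "canon ?\<Phi>"
  let ?R = "mApp ?M i O mSim ?M i"
  have phiC: "\<phi> \<in> ?\<Phi>" using inC cl_sub by fastforce
  have Rmcs: "mcs_in ?\<Phi> v" if "(u, v) \<in> ?R" for u v
    using that by (auto simp: canon_simps)
  have onestep: "FCirc i \<phi> \<in> v" if u: "mcs_in ?\<Phi> u" "FCirc i \<phi> \<in> u" and uv: "(u, v) \<in> ?R" for u v
  proof -
    obtain t where t: "(u, t) \<in> mApp ?M i" "(t, v) \<in> mSim ?M i" using uv by blast
    have inC2: "FSim i (FI i (FCirc i \<phi>)) \<in> ?\<Phi>" using cl.Circ_SIC[OF inC] .
    have "derives u (FSim i (FI i (FCirc i \<phi>)))"
      by (rule derives_prop[of "[FImp (FCirc i \<phi>) (FConj \<phi> (FSim i (FI i (FCirc i \<phi>)))), FCirc i \<phi>]"])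
        (use derives_AIL[OF AIL.Circ_mix[of i \<phi>]] derives_mem[OF u(2)] in auto)
    then have "FSim i (FI i (FCirc i \<phi>)) \<in> u" using mcs_derives[OF u(1) inC2] by blast
    then have "FI i (FCirc i \<phi>) \<in> t" using t(1) by (auto simp: canon_simps)
    then show ?thesis using t(2) by (auto simp: canon_simps)
  qed
  have phi_of: "\<phi> \<in> v" if v: "mcs_in ?\<Phi> v" "FCirc i \<phi> \<in> v" for v
  proof -
    have "derives v \<phi>"
      by (rule derives_prop[of "[FImp (FCirc i \<phi>) (FConj \<phi> (FSim i (FI i (FCirc i \<phi>)))), FCirc i \<phi>]"])
        (use derives_AIL[OF AIL.Circ_mix[of i \<phi>]] derives_mem[OF v(2)] in auto)
    then show ?thesis using mcs_derives[OF v(1) phiC] by blast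
  qed
  show ?thesis
  proof
    assume H: "sat ?M w (FCirc i \<phi>)"
    define X where "X = {v. (w, v) \<in> ?R\<^sup>+}"
    have Xmcs: "mcs_in ?\<Phi> v" if "v \<in> X" for v
    proof -
      have "(w, v) \<in> ?R\<^sup>+" using that unfolding X_def by simp
      then obtain y where "(y, v) \<in> ?R" by (rule tranclE) auto
      then show ?thesis by (rule Rmcs)
    qed
    have Xphi: "\<phi> \<in> v" if "v \<in> X" for v
    proof -
      have "sat ?M v \<phi>" using H that unfolding X_def by simp
      then show ?thesis using IH[OF Xmcs[OF that]] by simp
    qed
    have wfin: "{\<psi>. FSim i \<psi> \<in> w} \<subseteq> w" "{\<psi>. FI i \<psi> \<in> w} \<subseteq> w"
    proof -
      have wC: "w \<subseteq> ?\<Phi>" using w unfolding mcs_in_def by blast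
      show "{\<psi>. FSim i \<psi> \<in> w} \<subseteq> w"
      proof
        fix \<psi> assume "\<psi> \<in> {\<psi>. FSim i \<psi> \<in> w}"
        then have a: "FSim i \<psi> \<in> w" by simp
        then have "\<psi> \<in> ?\<Phi>" using wC cl_sub by fastforce
        moreover have "derives w \<psi>"
        proof -
          have "AIL (FImp (FSim i \<psi>) \<psi>)" by (rule AIL.T_box[where i=i]) simp
          then show ?thesis using derives_imp derives_mem[OF a] by blast
        qed
        ultimately show "\<psi> \<in> w" using mcs_derives[OF w] by blast
      qed
      show "{\<psi>. FI i \<psi> \<in> w} \<subseteq> w"
      proof
        fix \<psi> assume "\<psi> \<in> {\<psi>. FI i \<psi> \<in> w}"
        then have a: "FI i \<psi> \<in> w" by simp
        then have "\<psi> \<in> ?\<Phi>" using wC cl_sub by fastforce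
        moreover have "derives w \<psi>"
        proof -
          have "AIL (FImp (FI i \<psi>) \<psi>)" by (rule AIL.T_box[where i=i]) simp
          then show ?thesis using derives_imp derives_mem[OF a] by blast
        qed
        ultimately show "\<psi> \<in> w" using mcs_derives[OF w] by blast
      qed
    qed
    have "(w, w) \<in> ?R" using w wfin by (auto simp: canon_simps)
    then have wX: "w \<in> X" unfolding X_def by auto
    have "X \<subseteq> Pow ?\<Phi>" using Xmcs unfolding mcs_in_def by blast
    then have finX: "finite X" using finite_cl[of \<phi>0] finite_subset by blast
    obtain Xl where Xl: "set Xl = X" using finite_list[OF finX] by blast
    define lst where "lst v = (SOME L. set L = v)" for v :: "('a, 'g) fm set"
    have lst: "set (lst v) = v" if "v \<in> X" for v
    proof -
      have "finite v"
        by (rule finite_subset[OF _ finite_cl[of \<phi>0]]) (use Xmcs[OF that] in \<open>simp add: mcs_in_def\<close>)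
      then obtain L where "set L = v" using finite_list by blast
      then show ?thesis unfolding lst_def by (rule someI)
    qed
    define ch where "ch v = conjs (lst v)" for v
    define \<chi> where "\<chi> = FNeg (conjs (map (\<lambda>v. FNeg (ch v)) Xl))"
    have peval_chi: "peval h \<chi> \<longleftrightarrow> (\<exists>v\<in>X. \<forall>x\<in>v. peval h x)" for h
      unfolding \<chi>_def ch_def using Xl lst by auto
    have der_ch: "derives v \<chi>" if "v \<in> X" for v
    proof -
      have d: "derives v (ch v)" unfolding ch_def using lst[OF that] derives_conjs by blast
      show ?thesis unfolding \<chi>_def
        by (rule derives_prop[of "[ch v]"]; use d that Xl in auto)
    qed
    have T1: "AIL (FImp \<chi> \<phi>)"
      by (rule AIL_prop[of "[]"]) (use peval_chi Xphi in auto)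
    have T2: "AIL (FImp \<chi> (FSim i (FI i \<chi>)))"
    proof (rule ccontr)
      assume nT: "\<not> AIL (FImp \<chi> (FSim i (FI i \<chi>)))"
      let ?Z = "insert (FNeg (FSim i (FI i \<chi>))) {\<chi>}"
      have cZ: "consistent ?Z"
      proof (rule ccontr)
        assume "\<not> consistent ?Z"
        then have "derives {\<chi>} (FSim i (FI i \<chi>))" by (rule incons_insert_neg)
        then have "derives {} (FImp \<chi> (FSim i (FI i \<chi>)))" using deduction by fastforce
        then show False using nT derives_empty by blast
      qed
      obtain \<Delta> where D: "mcs_in ?\<Phi> \<Delta>" "consistent (?Z \<union> \<Delta>)" using lind[OF cZ] by blast
      have DX: "\<Delta> \<in> X"
      proof (rule ccontr)
        assume nX: "\<Delta> \<notin> X"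
        have dist: "derives \<Delta> (FNeg (ch v))" if vX: "v \<in> X" for v
        proof -
          have vD: "v \<noteq> \<Delta>" using vX nX by blast
          have vm: "mcs_in ?\<Phi> v" using Xmcs[OF vX] .
          have vC: "v \<subseteq> ?\<Phi>" "\<Delta> \<subseteq> ?\<Phi>" using vm D(1) unfolding mcs_in_def by blast+
          show ?thesis
          proof (cases "\<exists>\<psi>\<in>v. \<psi> \<notin> \<Delta>")
            case True
            then obtain \<psi> where p: "\<psi> \<in> v" "\<psi> \<notin> \<Delta>" by blast
            then have nn: "nneg \<psi> \<in> \<Delta>" using mcs_complete[OF D(1)] vC by blast
            show ?thesis unfolding ch_def
              by (rule derives_prop[of "[nneg \<psi>]"]; use nn p lst[OF vX] derives_mem in auto)
          next
            case False
            then obtain \<psi> where p: "\<psi> \<in> \<Delta>" "\<psi> \<notin> v" using vD by blast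
            then have nn: "nneg \<psi> \<in> v" using mcs_complete[OF vm] vC by blast
            show ?thesis unfolding ch_def
              by (rule derives_prop[of "[\<psi>]"]; use nn p lst[OF vX] derives_mem in \<open>auto intro!: bexI[of _ "nneg \<psi>"]\<close>)
          qed
        qed
        have "derives \<Delta> (FNeg \<chi>)"
          unfolding \<chi>_def
          by (rule derives_prop[of "map (\<lambda>v. FNeg (ch v)) Xl"]) (use dist Xl in auto)
        then have "derives (?Z \<union> \<Delta>) (FNeg \<chi>)" by (rule derives_mono) auto
        moreover have "derives (?Z \<union> \<Delta>) \<chi>" by (rule derives_mem) auto
        ultimately show False using D(2) incons by blast
      qed
      have c1: "consistent (insert (FNeg (FSim i (FI i \<chi>))) \<Delta>)"
        using D(2) consistent_mono by blast
      have KS: "\<And>a b. AIL (FImp (FSim i (FImp a b)) (FImp (FSim i a) (FSim i b)))"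
        by (rule AIL.K_box[where i=i]) simp
      have KI: "\<And>a b. AIL (FImp (FI i (FImp a b)) (FImp (FI i a) (FI i b)))"
        by (rule AIL.K_box[where i=i]) simp
      have subS: "\<And>\<psi>. FSim i \<psi> \<in> ?\<Phi> \<Longrightarrow> \<psi> \<in> ?\<Phi>" using cl_sub by fastforce
      have subI: "\<And>\<psi>. FI i \<psi> \<in> ?\<Phi> \<Longrightarrow> \<psi> \<in> ?\<Phi>" using cl_sub by fastforce
      obtain t where t: "mcs_in ?\<Phi> t" "{\<psi>. FSim i \<psi> \<in> \<Delta>} \<subseteq> t" "consistent (insert (FNeg (FI i \<chi>)) t)"
        using exist_box[OF KS AIL.Nec_Sim subS D(1) c1] by blast
      obtain u where u: "mcs_in ?\<Phi> u" "{\<psi>. FI i \<psi> \<in> t} \<subseteq> u" "consistent (insert (FNeg \<chi>) u)"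
        using exist_box[OF KI AIL.Nec_I subI t(1) t(3)] by blast
      have "(\<Delta>, u) \<in> ?R" using D(1) t u by (auto simp: canon_simps)
      then have "u \<in> X" using DX unfolding X_def by auto
      then have "derives (insert (FNeg \<chi>) u) \<chi>" using der_ch derives_mono by blast
      then show False using u(3) incons derives_mem by blast
    qed
    have T3: "AIL (FImp \<chi> (FCirc i \<chi>))"
      using AIL.MP[OF AIL.Circ_ind AIL.Nec_Circ[OF T2]] .
    have T4: "AIL (FImp (FCirc i \<chi>) (FCirc i \<phi>))"
      using AIL.MP[OF AIL.K_circ AIL.Nec_Circ[OF T1]] .
    have "derives w (FCirc i \<phi>)"
      using derives_imp[OF T4 derives_imp[OF T3 der_ch[OF wX]]] .
    then show "FCirc i \<phi> \<in> w" using mcs_derives[OF w inC] by blast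
  next
    assume a: "FCirc i \<phi> \<in> w"
    have "FCirc i \<phi> \<in> v \<and> mcs_in ?\<Phi> v" if "(w, v) \<in> ?R\<^sup>+" for v
      using that
    proof (induction rule: trancl_induct)
      case (base y)
      then show ?case using onestep[OF w a] Rmcs by blast
    next
      case (step y z)
      then show ?case using onestep Rmcs by blast
    qed
    then show "sat ?M w (FCirc i \<phi>)" using phi_of IH by auto
  qed
qed

lemma truth:
  fixes \<phi>0 :: "('a, 'g::finite) fm"
  shows "mcs_in (cl \<phi>0) w \<Longrightarrow> \<phi> \<in> cl \<phi>0 \<Longrightarrow> sat (canon (cl \<phi>0)) w \<phi> \<longleftrightarrow> \<phi> \<in> w"
proof (induction \<phi> arbitrary: w)
  case (FAtom p)
  then show ?case by (simp add: canon_simps)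
next
  case (FNeg \<phi>)
  have pC: "\<phi> \<in> cl \<phi>0" using cl_sub[OF FNeg.prems(2)] by simp
  have ih: "sat (canon (cl \<phi>0)) w \<phi> \<longleftrightarrow> \<phi> \<in> w" by (rule FNeg.IH[OF FNeg.prems(1) pC])
  have "\<phi> \<notin> w \<longleftrightarrow> FNeg \<phi> \<in> w"
  proof
    assume "\<phi> \<notin> w"
    then show "FNeg \<phi> \<in> w" using mcs_not[OF FNeg.prems(1) pC] mcs_derives[OF FNeg.prems] by blast
  next
    assume "FNeg \<phi> \<in> w"
    then show "\<phi> \<notin> w" using mcs_cons[OF FNeg.prems(1)] incons derives_mem by blast
  qed
  moreover have "sat (canon (cl \<phi>0)) w (FNeg \<phi>) \<longleftrightarrow> \<not> sat (canon (cl \<phi>0)) w \<phi>" by simp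
  ultimately show ?case using ih by blast
next
  case (FConj \<phi>1 \<phi>2)
  have pC: "\<phi>1 \<in> cl \<phi>0" "\<phi>2 \<in> cl \<phi>0" using cl_sub[OF FConj.prems(2)] by simp_all
  have ih1: "sat (canon (cl \<phi>0)) w \<phi>1 \<longleftrightarrow> \<phi>1 \<in> w" by (rule FConj.IH(1)[OF FConj.prems(1) pC(1)])
  have ih2: "sat (canon (cl \<phi>0)) w \<phi>2 \<longleftrightarrow> \<phi>2 \<in> w" by (rule FConj.IH(2)[OF FConj.prems(1) pC(2)])
  have "FConj \<phi>1 \<phi>2 \<in> w \<longleftrightarrow> derives w (FConj \<phi>1 \<phi>2)" by (rule mcs_mem_iff[OF FConj.prems])
  also have "\<dots> \<longleftrightarrow> derives w \<phi>1 \<and> derives w \<phi>2" by (rule derives_conj)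
  also have "\<dots> \<longleftrightarrow> \<phi>1 \<in> w \<and> \<phi>2 \<in> w"
    using mcs_mem_iff[OF FConj.prems(1) pC(1)] mcs_mem_iff[OF FConj.prems(1) pC(2)] by blast
  also have "\<dots> \<longleftrightarrow> sat (canon (cl \<phi>0)) w \<phi>1 \<and> sat (canon (cl \<phi>0)) w \<phi>2" using ih1 ih2 by blast
  also have "\<dots> \<longleftrightarrow> sat (canon (cl \<phi>0)) w (FConj \<phi>1 \<phi>2)" by simp
  finally show ?case by blast
next
  case (FA i \<phi>)
  show ?case by (rule truth_A[OF FA.prems])
next
  case (FI i \<phi>)
  have pC: "\<phi> \<in> cl \<phi>0" using cl_sub[OF FI.prems(2)] by simp
  have KI: "\<And>a b. AIL (FImp (FI i (FImp a b)) (FImp (FI i a) (FI i b)))"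
    by (rule AIL.K_box[where i=i]) simp
  have subI: "\<And>\<psi>. FI i \<psi> \<in> cl \<phi>0 \<Longrightarrow> \<psi> \<in> cl \<phi>0" using cl_sub by fastforce
  have ih: "\<And>v. mcs_in (cl \<phi>0) v \<Longrightarrow> sat (canon (cl \<phi>0)) v \<phi> \<longleftrightarrow> \<phi> \<in> v"
    using FI.IH pC by blast
  have rel: "\<And>v. (w, v) \<in> mSim (canon (cl \<phi>0)) i \<longleftrightarrow> mcs_in (cl \<phi>0) v \<and> {\<psi>. FI i \<psi> \<in> w} \<subseteq> v"
    using FI.prems(1) by (simp add: canon_simps)
  have "(\<forall>v. (w, v) \<in> mSim (canon (cl \<phi>0)) i \<longrightarrow> sat (canon (cl \<phi>0)) v \<phi>) \<longleftrightarrow> FI i \<phi> \<in> w"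
    by (rule truth_box[OF KI AIL.Nec_I subI ih FI.prems rel])
  then show ?case by simp
next
  case (FSim i \<phi>)
  have pC: "\<phi> \<in> cl \<phi>0" using cl_sub[OF FSim.prems(2)] by simp
  have KS: "\<And>a b. AIL (FImp (FSim i (FImp a b)) (FImp (FSim i a) (FSim i b)))"
    by (rule AIL.K_box[where i=i]) simp
  have subS: "\<And>\<psi>. FSim i \<psi> \<in> cl \<phi>0 \<Longrightarrow> \<psi> \<in> cl \<phi>0" using cl_sub by fastforce
  have ih: "\<And>v. mcs_in (cl \<phi>0) v \<Longrightarrow> sat (canon (cl \<phi>0)) v \<phi> \<longleftrightarrow> \<phi> \<in> v"
    using FSim.IH pC by blast
  have rel: "\<And>v. (w, v) \<in> mApp (canon (cl \<phi>0)) i \<longleftrightarrow> mcs_in (cl \<phi>0) v \<and> {\<psi>. FSim i \<psi> \<in> w} \<subseteq> v"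
    using FSim.prems(1) by (simp add: canon_simps)
  have "(\<forall>v. (w, v) \<in> mApp (canon (cl \<phi>0)) i \<longrightarrow> sat (canon (cl \<phi>0)) v \<phi>) \<longleftrightarrow> FSim i \<phi> \<in> w"
    by (rule truth_box[OF KS AIL.Nec_Sim subS ih FSim.prems rel])
  then show ?case by simp
next
  case (FE i \<phi>)
  have pC: "\<phi> \<in> cl \<phi>0" using cl_sub[OF FE.prems(2)] by simp
  have ih: "\<And>v. mcs_in (cl \<phi>0) v \<Longrightarrow> sat (canon (cl \<phi>0)) v \<phi> \<longleftrightarrow> \<phi> \<in> v"
    using FE.IH pC by blast
  have AC: "FA i \<phi> \<in> cl \<phi>0" "FCirc i \<phi> \<in> cl \<phi>0"
    using cl.E_A[OF FE.prems(2)] cl.E_Circ[OF FE.prems(2)] .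
  have "sat (canon (cl \<phi>0)) w (FE i \<phi>) \<longleftrightarrow>
     sat (canon (cl \<phi>0)) w (FA i \<phi>) \<and> sat (canon (cl \<phi>0)) w (FCirc i \<phi>)" by simp
  also have "\<dots> \<longleftrightarrow> FA i \<phi> \<in> w \<and> FCirc i \<phi> \<in> w"
    using truth_A[OF FE.prems(1) AC(1)] truth_Circ[OF ih FE.prems(1) AC(2)] by blast
  also have "\<dots> \<longleftrightarrow> derives w (FA i \<phi>) \<and> derives w (FCirc i \<phi>)"
    using mcs_mem_iff[OF FE.prems(1) AC(1)] mcs_mem_iff[OF FE.prems(1) AC(2)] by blast
  also have "\<dots> \<longleftrightarrow> derives w (FConj (FA i \<phi>) (FCirc i \<phi>))" by (rule derives_conj[symmetric])
  also have "\<dots> \<longleftrightarrow> derives w (FE i \<phi>)" by (rule derives_iff[OF AIL.E_def[of i \<phi>], symmetric])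
  also have "\<dots> \<longleftrightarrow> FE i \<phi> \<in> w" by (rule mcs_mem_iff[OF FE.prems, symmetric])
  finally show ?case .
next
  case (FCirc i \<phi>)
  have pC: "\<phi> \<in> cl \<phi>0" using cl_sub[OF FCirc.prems(2)] by simp
  have ih: "\<And>v. mcs_in (cl \<phi>0) v \<Longrightarrow> sat (canon (cl \<phi>0)) v \<phi> \<longleftrightarrow> \<phi> \<in> v"
    using FCirc.IH pC by blast
  show ?case by (rule truth_Circ[OF ih FCirc.prems])
qed

theorem lemma12:
  fixes \<phi>0 \<phi> :: "('a::countable, 'g::finite) fm"
    and w :: "('a, 'g) fm set"
  assumes "w \<in> mW (canon (cl \<phi>0))"
    and "\<phi> \<in> cl \<phi>0"
  shows "sat (canon (cl \<phi>0)) w \<phi> \<longleftrightarrow> \<phi> \<in> w"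
proof -
  have "mcs_in (cl \<phi>0) w" using assms(1) by (simp add: canon_simps)
  then show ?thesis by (rule truth[OF _ assms(2)])
qed


end
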